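(* Let $A$ be a skew brace. For a subset $S\subseteq\mathrm{Spec}\,A$ let $K(S)=\bigcap_{I\in S}I$. Then: (i) $K(\emptyset)=A$ and $K\big(\bigcup_{\lambda\in\Lambda}T_\lambda\big)=\bigcap_{\lambda\in\Lambda}K(T_\lambda)$ for every family $\{T_\lambda\}$ of subsets of $\mathrm{Spec}\,A$; (ii) for every ideal $I$ of $A$, $KH(I)=\mathrm{Rad}\,I$, and for every subset $S\subseteq\mathrm{Spec}\,A$, $HK(S)$ is the closure of $S$ in $\mathrm{Spec}\,A$.
   Context: A (left) skew brace is a triple $(A,+,\circ)$ where $(A,+)$ and $(A,\circ)$ are groups such that $a\circ(b+c)=a\circ b-a+a\circ c$ for all $a,b,c$; common identity $e$. Put $\lambda_a(b)=-a+a\circ b$ and $a*b=-a+a\circ b-b$. An ideal is a normal subgroup $I$ of both $(A,+)$ and $(A,\circ)$ with $\lambda_a(I)\subseteq I$ for all $a$. A prime ideal is a proper ideal $P$ such that for any subsets $X,Y$ of $A$, $\{x*y\mid x\in X,y\in Y\}\subseteq P$ implies $X\subseteq P$ or $Y\subseteq P$; $\mathrm{Spec}\,A$ is the set of prime ideals. For an ideal $I$, $H(I)=\{P\in\mathrm{Spec}\,A\mid I\subseteq P\}$ and $\mathrm{Rad}\,I=\bigcap\{P\in\mathrm{Spec}\,A\mid I\subseteq P\}$. The spectral topology on $\mathrm{Spec}\,A$ has as closed sets the sets $H(I)$, $I$ an ideal (and $K(S)$ is an ideal, so $HK(S)$ is defined). *)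

theory Defs
  imports "HOL-Algebra.Coset" "HOL-Analysis.Abstract_Topology"
begin

(* A (left) skew brace is given by two groups on the same carrier:
  P, the additive group (written with the HOL-Algebra product, so a + b is
  a \<otimes>_P b and -a is inv_P a), and C, the circle group. *)

definition skew_brace :: "'a monoid \<Rightarrow> 'a monoid \<Rightarrow> bool" where
  "skew_brace P C \<longleftrightarrow> group P \<and> group C \<and> carrier P = carrier C \<and>
     (\<forall>a\<in>carrier C. \<forall>b\<in>carrier C. \<forall>c\<in>carrier C.
        a \<otimes>\<^bsub>C\<^esub> (b \<otimes>\<^bsub>P\<^esub> c)
        = ((a \<otimes>\<^bsub>C\<^esub> b) \<otimes>\<^bsub>P\<^esub> inv\<^bsub>P\<^esub> a) \<otimes>\<^bsub>P\<^esub> (a \<otimes>\<^bsub>C\<^esub> c))"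

definition brace_lambda :: "'a monoid \<Rightarrow> 'a monoid \<Rightarrow> 'a \<Rightarrow> 'a \<Rightarrow> 'a" where
  "brace_lambda P C a b = inv\<^bsub>P\<^esub> a \<otimes>\<^bsub>P\<^esub> (a \<otimes>\<^bsub>C\<^esub> b)"

definition brace_star :: "'a monoid \<Rightarrow> 'a monoid \<Rightarrow> 'a \<Rightarrow> 'a \<Rightarrow> 'a" where
  "brace_star P C a b = (inv\<^bsub>P\<^esub> a \<otimes>\<^bsub>P\<^esub> (a \<otimes>\<^bsub>C\<^esub> b)) \<otimes>\<^bsub>P\<^esub> inv\<^bsub>P\<^esub> b"

definition brace_ideal :: "'a monoid \<Rightarrow> 'a monoid \<Rightarrow> 'a set \<Rightarrow> bool" where
  "brace_ideal P C I \<longleftrightarrow> I \<subseteq> carrier C \<and> normal I P \<and> normal I C \<and>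
     (\<forall>a\<in>carrier C. brace_lambda P C a ` I \<subseteq> I)"

definition prime_ideal :: "'a monoid \<Rightarrow> 'a monoid \<Rightarrow> 'a set \<Rightarrow> bool" where
  "prime_ideal P C Q \<longleftrightarrow> brace_ideal P C Q \<and> Q \<noteq> carrier C \<and>
     (\<forall>X Y. X \<subseteq> carrier C \<longrightarrow> Y \<subseteq> carrier C \<longrightarrow>
        {brace_star P C x y | x y. x \<in> X \<and> y \<in> Y} \<subseteq> Q \<longrightarrow> X \<subseteq> Q \<or> Y \<subseteq> Q)"

definition Spec :: "'a monoid \<Rightarrow> 'a monoid \<Rightarrow> 'a set set" where
  "Spec P C = {Q. prime_ideal P C Q}"

definition Hset :: "'a monoid \<Rightarrow> 'a monoid \<Rightarrow> 'a set \<Rightarrow> 'a set set" where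
  "Hset P C I = {Q \<in> Spec P C. I \<subseteq> Q}"

(* Intersections are taken inside A, so the empty intersection is A. *)
definition Rad :: "'a monoid \<Rightarrow> 'a monoid \<Rightarrow> 'a set \<Rightarrow> 'a set" where
  "Rad P C I = carrier C \<inter> \<Inter> (Hset P C I)"

definition Kset :: "'a monoid \<Rightarrow> 'a monoid \<Rightarrow> 'a set set \<Rightarrow> 'a set" where
  "Kset P C S = carrier C \<inter> \<Inter> S"

definition spectral_topology :: "'a monoid \<Rightarrow> 'a monoid \<Rightarrow> 'a set topology" where
  "spectral_topology P C = topology (\<lambda>U. U \<subseteq> Spec P C \<and>
     (\<exists>I. brace_ideal P C I \<and> Spec P C - U = Hset P C I))"

end

theory Submission
  imports Defs
begin

lemma normal_Inter_fam:
  fixes G (structure)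
  assumes "group G" "F \<noteq> {}" "\<And>N. N \<in> F \<Longrightarrow> N \<lhd> G"
  shows "\<Inter>F \<lhd> G"
proof -
  interpret group G by fact
  have "subgroup (\<Inter>F) G"
    by (rule subgroups_Inter) (use assms normal_imp_subgroup in auto)
  moreover have "\<forall>x\<in>carrier G. \<forall>h\<in>\<Inter>F. x \<otimes> h \<otimes> inv x \<in> \<Inter>F"
    using assms(3) normal_inv_iff by blast
  ultimately show ?thesis using normal_inv_iff by blast
qed

lemma ideal_Inter_fam:
  assumes "group P" "group C" "carrier P = carrier C" "F \<noteq> {}"
    "\<And>I. I \<in> F \<Longrightarrow> brace_ideal P C I"
  shows "brace_ideal P C (\<Inter>F)"
proof -
  have "\<Inter>F \<lhd> P" using normal_Inter_fam[OF assms(1,4)] assms(5) unfolding brace_ideal_def by blast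
  moreover have "\<Inter>F \<lhd> C" using normal_Inter_fam[OF assms(2,4)] assms(5) unfolding brace_ideal_def by blast
  moreover have "\<Inter>F \<subseteq> carrier C" using assms(4,5) unfolding brace_ideal_def by blast
  moreover have "\<forall>a\<in>carrier C. brace_lambda P C a ` \<Inter>F \<subseteq> \<Inter>F"
    using assms(5) unfolding brace_ideal_def by blast
  ultimately show ?thesis unfolding brace_ideal_def by blast
qed

lemma ideal_carrier:
  assumes "group P" "group C" "carrier P = carrier C"
  shows "brace_ideal P C (carrier C)"
proof -
  have nP: "carrier P \<lhd> P"
    using group.normal_inv_iff[OF assms(1)] group.subgroup_self[OF assms(1)] assms(1)
    by (simp add: group.subgroup_self monoid.m_closed group.is_monoid)
  have nC: "carrier C \<lhd> C"
    using group.normal_inv_iff[OF assms(2)] group.subgroup_self[OF assms(2)] assms(2)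
    by (simp add: group.subgroup_self monoid.m_closed group.is_monoid)
  have "\<forall>a\<in>carrier C. brace_lambda P C a ` carrier C \<subseteq> carrier C"
    using assms unfolding brace_lambda_def
    by (auto intro!: monoid.m_closed group.is_monoid group.inv_closed)
  then show ?thesis using nP nC assms(3) unfolding brace_ideal_def by auto
qed

lemma star_in_both:
  assumes "group P" "group C" "carrier P = carrier C"
    and I: "brace_ideal P C I" and J: "brace_ideal P C J" and x: "x \<in> I" and y: "y \<in> J"
  shows "brace_star P C x y \<in> I \<inter> J"
proof -
  interpret p: group P by fact
  interpret c: group C by fact
  have IP: "I \<lhd> P" and IC: "I \<lhd> C" and JP: "J \<lhd> P"
    and lI: "\<forall>a\<in>carrier C. brace_lambda P C a ` I \<subseteq> I"
    and lJ: "\<forall>a\<in>carrier C. brace_lambda P C a ` J \<subseteq> J"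
    using I J unfolding brace_ideal_def by auto
  have sIP: "subgroup I P" and sJP: "subgroup J P" and sIC: "subgroup I C"
    using IP JP IC normal_imp_subgroup by auto
  have xc: "x \<in> carrier C" using x sIC subgroup.subset by blast
  have yc: "y \<in> carrier C" using y sJP subgroup.subset assms(3) by blast
  have xp: "x \<in> carrier P" using xc assms(3) by simp
  have yp: "y \<in> carrier P" using yc assms(3) by simp
  have xyc: "x \<otimes>\<^bsub>C\<^esub> y \<in> carrier P" using xc yc assms(3) by simp
  have "brace_lambda P C x y \<in> J" using lJ xc y by blast
  moreover have "brace_star P C x y = brace_lambda P C x y \<otimes>\<^bsub>P\<^esub> inv\<^bsub>P\<^esub> y"
    unfolding brace_star_def brace_lambda_def by simp
  ultimately have inJ: "brace_star P C x y \<in> J"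
    using sJP y by (simp add: subgroup.m_closed subgroup.m_inv_closed)
  define x' where "x' = inv\<^bsub>C\<^esub> y \<otimes>\<^bsub>C\<^esub> x \<otimes>\<^bsub>C\<^esub> inv\<^bsub>C\<^esub> (inv\<^bsub>C\<^esub> y)"
  have x'I: "x' \<in> I" unfolding x'_def
    using IC c.normal_inv_iff x yc by blast
  have x'c: "x' \<in> carrier C" using x'I sIC subgroup.subset by blast
  have e1: "x \<otimes>\<^bsub>C\<^esub> y = y \<otimes>\<^bsub>C\<^esub> x'"
    unfolding x'_def using xc yc by (simp add: c.m_assoc[symmetric])
  have lx': "brace_lambda P C y x' \<in> I" using lI yc x'I by blast
  have lx'p: "brace_lambda P C y x' \<in> carrier P" using lx' sIP subgroup.subset by blast
  have e2: "y \<otimes>\<^bsub>C\<^esub> x' = y \<otimes>\<^bsub>P\<^esub> brace_lambda P C y x'"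
  proof -
    have "y \<otimes>\<^bsub>C\<^esub> x' \<in> carrier P" using x'c yc assms(3) by simp
    then show ?thesis unfolding brace_lambda_def using yp
      by (simp add: p.m_assoc[symmetric])
  qed
  have inner: "y \<otimes>\<^bsub>P\<^esub> brace_lambda P C y x' \<otimes>\<^bsub>P\<^esub> inv\<^bsub>P\<^esub> y \<in> I"
    using IP p.normal_inv_iff yp lx' by blast
  have "brace_star P C x y = inv\<^bsub>P\<^esub> x \<otimes>\<^bsub>P\<^esub> (y \<otimes>\<^bsub>P\<^esub> brace_lambda P C y x' \<otimes>\<^bsub>P\<^esub> inv\<^bsub>P\<^esub> y)"
    unfolding brace_star_def using e1 e2 xp yp lx'p xyc
    by (simp add: p.m_assoc)
  then have inI: "brace_star P C x y \<in> I"
    using inner sIP x by (simp add: subgroup.m_closed subgroup.m_inv_closed)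
  show ?thesis using inI inJ by blast
qed

lemma prime_Int_ideal:
  assumes "group P" "group C" "carrier P = carrier C"
    and Q: "prime_ideal P C Q" and I: "brace_ideal P C I" and J: "brace_ideal P C J"
    and sub: "I \<inter> J \<subseteq> Q"
  shows "I \<subseteq> Q \<or> J \<subseteq> Q"
proof -
  have "{brace_star P C x y | x y. x \<in> I \<and> y \<in> J} \<subseteq> Q"
    using star_in_both[OF assms(1,2,3) I J] sub by blast
  moreover have "I \<subseteq> carrier C" "J \<subseteq> carrier C" using I J unfolding brace_ideal_def by auto
  ultimately show ?thesis using Q unfolding prime_ideal_def by blast
qed


lemma prime_is_ideal: "prime_ideal P C Q \<Longrightarrow> brace_ideal P C Q"
  unfolding prime_ideal_def by blast

lemma prime_sub: "prime_ideal P C Q \<Longrightarrow> Q \<subseteq> carrier C"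
  unfolding prime_ideal_def brace_ideal_def by blast

lemma istop_spec:
  assumes "group P" "group C" "carrier P = carrier C"
  shows "istopology (\<lambda>U. U \<subseteq> Spec P C \<and>
     (\<exists>I. brace_ideal P C I \<and> Spec P C - U = Hset P C I))"
  unfolding istopology_def
proof (rule conjI; intro allI impI)
  fix S T
  assume S: "S \<subseteq> Spec P C \<and> (\<exists>I. brace_ideal P C I \<and> Spec P C - S = Hset P C I)"
     and T: "T \<subseteq> Spec P C \<and> (\<exists>I. brace_ideal P C I \<and> Spec P C - T = Hset P C I)"
  then obtain I J where I: "brace_ideal P C I" "Spec P C - S = Hset P C I"
    and J: "brace_ideal P C J" "Spec P C - T = Hset P C J" by blast
  have IJ: "brace_ideal P C (I \<inter> J)" using ideal_Inter_fam[OF assms, of "{I,J}"] I J by auto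
  have "Spec P C - (S \<inter> T) = Hset P C (I \<inter> J)"
  proof -
    have "Spec P C - (S \<inter> T) = Hset P C I \<union> Hset P C J" using I J by blast
    also have "\<dots> = Hset P C (I \<inter> J)"
      using prime_Int_ideal[OF assms _ I(1) J(1)] unfolding Hset_def Spec_def by blast
    finally show ?thesis .
  qed
  then show "S \<inter> T \<subseteq> Spec P C \<and> (\<exists>I. brace_ideal P C I \<and> Spec P C - S \<inter> T = Hset P C I)"
    using S IJ by blast
next
  fix K
  assume K: "\<forall>S\<in>K. S \<subseteq> Spec P C \<and> (\<exists>I. brace_ideal P C I \<and> Spec P C - S = Hset P C I)"
  then obtain f where f: "\<And>S. S \<in> K \<Longrightarrow> brace_ideal P C (f S) \<and> Spec P C - S = Hset P C (f S)"
    by metis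
  define G where "G = {J. brace_ideal P C J \<and> (\<forall>S\<in>K. f S \<subseteq> J)}"
  have cG: "carrier C \<in> G" unfolding G_def using ideal_carrier[OF assms] f
    unfolding brace_ideal_def by blast
  have J0: "brace_ideal P C (\<Inter>G)"
    by (rule ideal_Inter_fam[OF assms]) (use cG G_def in auto)
  have "Spec P C - \<Union>K = Hset P C (\<Inter>G)"
  proof (intro equalityI subsetI)
    fix Q assume Q: "Q \<in> Spec P C - \<Union>K"
    then have "\<forall>S\<in>K. f S \<subseteq> Q" using f unfolding Hset_def by blast
    moreover have "brace_ideal P C Q" using Q prime_is_ideal unfolding Spec_def by blast
    ultimately have "Q \<in> G" unfolding G_def by blast
    then show "Q \<in> Hset P C (\<Inter>G)" using Q unfolding Hset_def by blast
  next
    fix Q assume Q: "Q \<in> Hset P C (\<Inter>G)"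
    have "\<forall>S\<in>K. f S \<subseteq> \<Inter>G" unfolding G_def by blast
    then have "\<forall>S\<in>K. Q \<in> Hset P C (f S)" using Q unfolding Hset_def by blast
    then show "Q \<in> Spec P C - \<Union>K" using f Q unfolding Hset_def by blast
  qed
  then show "\<Union>K \<subseteq> Spec P C \<and> (\<exists>I. brace_ideal P C I \<and> Spec P C - \<Union>K = Hset P C I)"
    using K J0 by blast
qed

lemma openin_spec:
  assumes "group P" "group C" "carrier P = carrier C"
  shows "openin (spectral_topology P C) U \<longleftrightarrow> U \<subseteq> Spec P C \<and>
     (\<exists>I. brace_ideal P C I \<and> Spec P C - U = Hset P C I)"
  unfolding spectral_topology_def using istop_spec[OF assms] by simp

lemma topspace_spec:
  assumes "group P" "group C" "carrier P = carrier C"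
  shows "topspace (spectral_topology P C) = Spec P C"
proof -
  have "Hset P C (carrier C) = {}"
    unfolding Hset_def Spec_def prime_ideal_def brace_ideal_def by blast
  then have "openin (spectral_topology P C) (Spec P C)"
    using openin_spec[OF assms] ideal_carrier[OF assms] by auto
  then show ?thesis unfolding topspace_def using openin_spec[OF assms] by blast
qed

lemma closedin_spec:
  assumes "group P" "group C" "carrier P = carrier C"
  shows "closedin (spectral_topology P C) S \<longleftrightarrow> S \<subseteq> Spec P C \<and>
     (\<exists>I. brace_ideal P C I \<and> S = Hset P C I)"
proof -
  have "\<And>S. S \<subseteq> Spec P C \<Longrightarrow> Spec P C - (Spec P C - S) = S" by blast
  then show ?thesis unfolding closedin_def topspace_spec[OF assms] openin_spec[OF assms]
    by auto
qed

theorem theorem4p4: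
  fixes P C :: "'a monoid" and T :: "'i \<Rightarrow> 'a set set" and \<Lambda> :: "'i set"
  assumes "skew_brace P C"
  shows "Kset P C {} = carrier C
    \<and> ((\<forall>l\<in>\<Lambda>. T l \<subseteq> Spec P C) \<longrightarrow>
         Kset P C (\<Union>l\<in>\<Lambda>. T l) = carrier C \<inter> (\<Inter>l\<in>\<Lambda>. Kset P C (T l)))
    \<and> (\<forall>I. brace_ideal P C I \<longrightarrow> Kset P C (Hset P C I) = Rad P C I)
    \<and> (\<forall>S. S \<subseteq> Spec P C \<longrightarrow>
         Hset P C (Kset P C S) = spectral_topology P C closure_of S)"
proof -
  have g: "group P" "group C" "carrier P = carrier C"
    using assms unfolding skew_brace_def by auto
  have part4: "Hset P C (Kset P C S) = spectral_topology P C closure_of S"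
    if S: "S \<subseteq> Spec P C" for S
  proof -
    let ?X = "spectral_topology P C"
    have Kid: "brace_ideal P C (Kset P C S)"
    proof -
      have "Kset P C S = \<Inter>(insert (carrier C) S)" unfolding Kset_def by auto
      moreover have "brace_ideal P C (\<Inter>(insert (carrier C) S))"
        by (rule ideal_Inter_fam[OF g]) (use ideal_carrier[OF g] S prime_is_ideal in
            \<open>auto simp: Spec_def\<close>)
      ultimately show ?thesis by simp
    qed
    have cl: "closedin ?X (Hset P C (Kset P C S))"
      using closedin_spec[OF g] Kid unfolding Hset_def by blast
    have sub: "S \<subseteq> Hset P C (Kset P C S)"
      using S unfolding Hset_def Kset_def by blast
    have "?X closure_of S \<subseteq> Hset P C (Kset P C S)"
      by (rule closure_of_minimal[OF sub cl])
    moreover have "Hset P C (Kset P C S) \<subseteq> ?X closure_of S"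
    proof -
      have "closedin ?X (?X closure_of S)" by simp
      then obtain I where I: "brace_ideal P C I" "?X closure_of S = Hset P C I"
        using closedin_spec[OF g] by blast
      have "S \<subseteq> ?X closure_of S"
        by (rule closure_of_subset) (use S topspace_spec[OF g] in simp)
      then have "\<forall>Q\<in>S. I \<subseteq> Q" using I unfolding Hset_def by blast
      moreover have "I \<subseteq> carrier C" using I unfolding brace_ideal_def by blast
      ultimately have "I \<subseteq> Kset P C S" unfolding Kset_def by blast
      then show ?thesis using I unfolding Hset_def by blast
    qed
    ultimately show ?thesis by blast
  qed
  show ?thesis
    apply (intro conjI impI allI)
    subgoal unfolding Kset_def by simp
    subgoal unfolding Kset_def by blast
    subgoal unfolding Kset_def Rad_def by simp
    subgoal using part4 by blast
    done
qed

end
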